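(* Let $L\subseteq\Sigma^\omega$ be a language recognised by some deterministic coBüchi automaton, and let $\mathcal{A}_{\min}$ be a nice, safe minimal and safe centralised history-deterministic coBüchi automaton recognising $L$, with safe components $\mathcal{S}_1,\dots,\mathcal{S}_k$ (state sets $S_i$, transition sets $\Delta_i$). Let $R_1,\dots,R_m$ be the distinct residuals of $L$, with $R_1=L$, and for each $j$ let $Q^{R_j}$ be the set of states $q$ of $\mathcal{A}_{\min}$ whose language (with $q$ as initial state) is $R_j$. Let $n_j=\max_{1\le i\le k}|S_i\cap Q^{R_j}|$, let $P_j=\{p_j^1,\dots,p_j^{n_j}\}$ be pairwise disjoint sets, and $Q=P_1\cup\dots\cup P_m$. Let $\mathcal{A}_{\mathrm{gen}}$ be the generalised coBüchi automaton with states $Q$, initial state $p_1^1$, colours $\{1,\dots,k\}$, and transitions: for every transition $(q,a,q')$ of $\mathcal{A}_{\min}$ with $q\in Q^{R_j}$ and $q'\in Q^{R_{j'}}$, all triples $(p,a,p')$ with $p\in P_j$, $p'\in P_{j'}$. For each $i$, let $\phi_i:S_i\to Q$ be an injective map with $\phi_i(q)\in P_j$ whenever $q\in Q^{R_j}$, extended to transitions by $\phi_i(q,a,q')=(\phi_i(q),a,\phi_i(q'))$, and label each transition $e$ of $\mathcal{A}_{\mathrm{gen}}$ by $\mathrm{col}(e)=\{i : \text{there is no } e'\in\Delta_i \text{ with } \phi_i(e')=e\}$. Then $\mathcal{A}_{\mathrm{gen}}$ is history-deterministic and $\mathcal{L}(\mathcal{A}_{\mathrm{gen}})=L$.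
   Context: An automaton is a tuple $(Q,\Sigma,q_{\mathrm{init}},\Delta,\Gamma,\mathrm{col},W)$ with finite state set, finite input alphabet $\Sigma$, initial state, transitions $\Delta\subseteq Q\times\Sigma\times Q$, output alphabet $\Gamma$, labelling $\mathrm{col}:\Delta\to\Gamma$, acceptance condition $W\subseteq\Gamma^\omega$. A run on $w=a_1a_2\cdots$ is a sequence $(q_0,a_1,q_1)(q_1,a_2,q_2)\cdots$ of transitions with $q_0=q_{\mathrm{init}}$, accepting if its label sequence is in $W$; $\mathcal{L}(\mathcal{A})$ is the set of words with an accepting run. With a finite colour set $C$ and $\Gamma=2^C$, generalised coBüchi means $W=\{x : \text{some } c\in C \text{ occurs in only finitely many letters of } x\}$; a coBüchi automaton is the case $C=\{1\}$, its coBüchi transitions being those labelled $\{1\}$. A resolver is a map $\sigma:\Sigma^+\to\Delta$ such that for every $w=a_0a_1\cdots$, $\sigma(a_0)\sigma(a_0a_1)\cdots$ is a run on $w$, accepting whenever $w\in\mathcal{L}(\mathcal{A})$; history-deterministic means a resolver exists. The residual of $L$ with respect to $u\in\Sigma^*$ is $u^{-1}L=\{w\in\Sigma^\omega : uw\in L\}$. For a coBüchi automaton: $\mathcal{A}_{\mathrm{safe}}$ is obtained by deleting coBüchi transitions; a safe component is a strongly connected component of $\mathcal{A}_{\mathrm{safe}}$; the safe language of $q$ is the set of words with an infinite path from $q$ in $\mathcal{A}_{\mathrm{safe}}$; two states are equivalent if the automaton started from each recognises the same language. Semantically deterministic: $(q,a,p_1),(q,a,p_2)\in\Delta$ implies $p_1,p_2$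 equivalent; normal form: transitions between different safe components are coBüchi transitions; safe deterministic: $\mathcal{A}_{\mathrm{safe}}$ deterministic; nice: all states reachable, semantically deterministic, normal form, safe deterministic. Safe centralised: equivalent states with inclusion-comparable safe languages lie in the same safe component; safe minimal: equivalent states with equal safe languages are equal. *)

theory Defs
  imports Main "HOL-Library.Omega_Words_Fun"
begin

(* Alphabet: a finite type 'a (Sigma = UNIV).  Infinite words: 'a word = nat => 'a. *)

type_synonym ('q,'a) tr = "'q \<times> 'a \<times> 'q"

(* Generalised coBuechi automaton: output alphabet Gamma = Pow colours,
   acceptance: some colour occurs in only finitely many labels. *)
record ('q,'a) gcba =
  states  :: "'q set"
  init    :: 'q
  trans   :: "('q,'a) tr set"
  colours :: "nat set"
  col     :: "('q,'a) tr \<Rightarrow> nat set"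

definition wf_aut :: "('q,'a::finite) gcba \<Rightarrow> bool" where
  "wf_aut A \<longleftrightarrow> finite (states A) \<and> finite (colours A) \<and> init A \<in> states A
     \<and> trans A \<subseteq> states A \<times> UNIV \<times> states A
     \<and> (\<forall>e\<in>trans A. col A e \<subseteq> colours A)"

definition is_run :: "('q,'a) gcba \<Rightarrow> 'q \<Rightarrow> 'a word \<Rightarrow> (nat \<Rightarrow> ('q,'a) tr) \<Rightarrow> bool" where
  "is_run A q w r \<longleftrightarrow> fst (r 0) = q \<and>
     (\<forall>i. r i \<in> trans A \<and> fst (snd (r i)) = w i \<and> snd (snd (r i)) = fst (r (Suc i)))"

definition accepting :: "('q,'a) gcba \<Rightarrow> (nat \<Rightarrow> ('q,'a) tr) \<Rightarrow> bool" where
  "accepting A r \<longleftrightarrow> (\<exists>c\<in>colours A. finite {i. c \<in> col A (r i)})"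

definition lang :: "('q,'a) gcba \<Rightarrow> 'a word set" where
  "lang A = {w. \<exists>r. is_run A (init A) w r \<and> accepting A r}"

definition state_lang :: "('q,'a) gcba \<Rightarrow> 'q \<Rightarrow> 'a word set" where
  "state_lang A q = lang (A\<lparr>init := q\<rparr>)"

(* resolver: sigma : Sigma^+ -> Delta, applied to nonempty prefixes *)
definition is_resolver :: "('q,'a) gcba \<Rightarrow> ('a list \<Rightarrow> ('q,'a) tr) \<Rightarrow> bool" where
  "is_resolver A \<sigma> \<longleftrightarrow> (\<forall>w. is_run A (init A) w (\<lambda>i. \<sigma> (prefix (Suc i) w)) \<and>
       (w \<in> lang A \<longrightarrow> accepting A (\<lambda>i. \<sigma> (prefix (Suc i) w))))"

definition history_deterministic :: "('q,'a) gcba \<Rightarrow> bool" where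
  "history_deterministic A \<longleftrightarrow> (\<exists>\<sigma>. is_resolver A \<sigma>)"

definition is_cobuchi :: "('q,'a::finite) gcba \<Rightarrow> bool" where
  "is_cobuchi A \<longleftrightarrow> wf_aut A \<and> colours A = {1}"

definition deterministic :: "('q,'a) gcba \<Rightarrow> bool" where
  "deterministic A \<longleftrightarrow> (\<forall>q a p1 p2. (q,a,p1) \<in> trans A \<and> (q,a,p2) \<in> trans A \<longrightarrow> p1 = p2)"

definition cob_trans :: "('q,'a) gcba \<Rightarrow> ('q,'a) tr \<Rightarrow> bool" where
  "cob_trans A e \<longleftrightarrow> e \<in> trans A \<and> col A e = {1}"

definition safe_trans :: "('q,'a) gcba \<Rightarrow> ('q,'a) tr \<Rightarrow> bool" where
  "safe_trans A e \<longleftrightarrow> e \<in> trans A \<and> \<not> cob_trans A e"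

definition safe_step :: "('q,'a) gcba \<Rightarrow> 'q \<Rightarrow> 'q \<Rightarrow> bool" where
  "safe_step A p q \<longleftrightarrow> (\<exists>a. safe_trans A (p,a,q))"

definition step :: "('q,'a) gcba \<Rightarrow> 'q \<Rightarrow> 'q \<Rightarrow> bool" where
  "step A p q \<longleftrightarrow> (\<exists>a. (p,a,q) \<in> trans A)"

definition same_safe_comp :: "('q,'a) gcba \<Rightarrow> 'q \<Rightarrow> 'q \<Rightarrow> bool" where
  "same_safe_comp A p q \<longleftrightarrow> p \<in> states A \<and> q \<in> states A \<and>
     (safe_step A)\<^sup>*\<^sup>* p q \<and> (safe_step A)\<^sup>*\<^sup>* q p"

definition safe_components :: "('q,'a) gcba \<Rightarrow> 'q set set" where
  "safe_components A = {{q \<in> states A. same_safe_comp A p q} | p. p \<in> states A}"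

definition comp_trans :: "('q,'a) gcba \<Rightarrow> 'q set \<Rightarrow> ('q,'a) tr set" where
  "comp_trans A S = {e. safe_trans A e \<and> fst e \<in> S \<and> snd (snd e) \<in> S}"

definition safe_lang :: "('q,'a) gcba \<Rightarrow> 'q \<Rightarrow> 'a word set" where
  "safe_lang A q = {w. \<exists>r. is_run A q w r \<and> (\<forall>i. safe_trans A (r i))}"

definition equiv_states :: "('q,'a) gcba \<Rightarrow> 'q \<Rightarrow> 'q \<Rightarrow> bool" where
  "equiv_states A p q \<longleftrightarrow> state_lang A p = state_lang A q"

definition all_reachable :: "('q,'a) gcba \<Rightarrow> bool" where
  "all_reachable A \<longleftrightarrow> (\<forall>q\<in>states A. (step A)\<^sup>*\<^sup>* (init A) q)"

definition sem_det :: "('q,'a) gcba \<Rightarrow> bool" where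
  "sem_det A \<longleftrightarrow> (\<forall>q a p1 p2. (q,a,p1) \<in> trans A \<and> (q,a,p2) \<in> trans A \<longrightarrow> equiv_states A p1 p2)"

definition normal_form :: "('q,'a) gcba \<Rightarrow> bool" where
  "normal_form A \<longleftrightarrow> (\<forall>p a q. (p,a,q) \<in> trans A \<and> \<not> same_safe_comp A p q \<longrightarrow> cob_trans A (p,a,q))"

definition safe_det :: "('q,'a) gcba \<Rightarrow> bool" where
  "safe_det A \<longleftrightarrow> (\<forall>q a p1 p2. safe_trans A (q,a,p1) \<and> safe_trans A (q,a,p2) \<longrightarrow> p1 = p2)"

definition nice :: "('q,'a) gcba \<Rightarrow> bool" where
  "nice A \<longleftrightarrow> all_reachable A \<and> sem_det A \<and> normal_form A \<and> safe_det A"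

definition safe_centralised :: "('q,'a) gcba \<Rightarrow> bool" where
  "safe_centralised A \<longleftrightarrow> (\<forall>p\<in>states A. \<forall>q\<in>states A. equiv_states A p q \<and>
     (safe_lang A p \<subseteq> safe_lang A q \<or> safe_lang A q \<subseteq> safe_lang A p) \<longrightarrow> same_safe_comp A p q)"

definition safe_minimal :: "('q,'a) gcba \<Rightarrow> bool" where
  "safe_minimal A \<longleftrightarrow> (\<forall>p\<in>states A. \<forall>q\<in>states A. equiv_states A p q \<and>
     safe_lang A p = safe_lang A q \<longrightarrow> p = q)"

definition residuals :: "'a word set \<Rightarrow> 'a word set set" where
  "residuals L = {{w. u \<frown> w \<in> L} | u. True}"

end

theory Submission
  imports Defs
begin


lemma state_lang_alt: "state_lang A q = {w. \<exists>r. is_run A q w r \<and> accepting A r}"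
  by (simp add: state_lang_def lang_def is_run_def accepting_def)

lemma step_lang_sub:
  assumes "(q,a,q') \<in> trans A"
  shows "state_lang A q' \<subseteq> {w. a ## w \<in> state_lang A q}"
proof
  fix w assume "w \<in> state_lang A q'"
  then obtain r where r: "is_run A q' w r" "accepting A r" by (auto simp: state_lang_alt)
  define r' where "r' = (\<lambda>i. case i of 0 \<Rightarrow> (q,a,q') | Suc j \<Rightarrow> r j)"
  have "is_run A q (a ## w) r'"
    unfolding is_run_def
  proof (intro conjI allI)
    show "fst (r' 0) = q" by (simp add: r'_def)
  next
    fix i
    have r0: "fst (r 0) = q'" and rr: "r i \<in> trans A \<and> fst (snd (r i)) = w i \<and> snd (snd (r i)) = fst (r (Suc i))" for i
      using r(1) by (auto simp: is_run_def)
    show "r' i \<in> trans A" using assms rr by (cases i) (auto simp: r'_def)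
    show "fst (snd (r' i)) = (a ## w) i" using rr by (cases i) (auto simp: r'_def)
    show "snd (snd (r' i)) = fst (r' (Suc i))" using rr r0 by (cases i) (auto simp: r'_def)
  qed
  moreover have "accepting A r'"
  proof -
    from r(2) obtain c where c: "c \<in> colours A" "finite {i. c \<in> col A (r i)}" by (auto simp: accepting_def)
    have "{i. c \<in> col A (r' i)} \<subseteq> insert 0 (Suc ` {i. c \<in> col A (r i)})"
    proof
      fix i assume "i \<in> {i. c \<in> col A (r' i)}"
      then show "i \<in> insert 0 (Suc ` {i. c \<in> col A (r i)})" by (cases i) (auto simp: r'_def)
    qed
    moreover have "finite (insert 0 (Suc ` {i. c \<in> col A (r i)}))" using c(2) by simp
    ultimately have "finite {i. c \<in> col A (r' i)}" by (rule finite_subset)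
    with c(1) show ?thesis by (auto simp: accepting_def)
  qed
  ultimately show "w \<in> {w. a ## w \<in> state_lang A q}" by (auto simp: state_lang_alt)
qed

lemma step_lang_sup:
  assumes "(q,a,q') \<in> trans A" "sem_det A"
  shows "{w. a ## w \<in> state_lang A q} \<subseteq> state_lang A q'"
proof
  fix w assume "w \<in> {w. a ## w \<in> state_lang A q}"
  then obtain r where r: "is_run A q (a ## w) r" "accepting A r" by (auto simp: state_lang_alt)
  obtain q2 where r0: "r 0 = (q,a,q2)" "(q,a,q2) \<in> trans A" using r(1) unfolding is_run_def
    by (metis build.simps(1) prod.collapse)
  have "is_run A q2 w (\<lambda>i. r (Suc i))"
    using r(1) r0 unfolding is_run_def by (auto simp: build.simps) (metis snd_conv)
  moreover have "accepting A (\<lambda>i. r (Suc i))"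
  proof -
    from r(2) obtain c where c: "c \<in> colours A" "finite {i. c \<in> col A (r i)}" by (auto simp: accepting_def)
    have "{i. c \<in> col A (r (Suc i))} = Suc -` {i. c \<in> col A (r i)}" by auto
    moreover have "finite (Suc -` {i. c \<in> col A (r i)})" using c(2) by (intro finite_vimageI) auto
    ultimately have "finite {i. c \<in> col A (r (Suc i))}" by simp
    with c(1) show ?thesis by (auto simp: accepting_def)
  qed
  ultimately have "w \<in> state_lang A q2" by (auto simp: state_lang_alt)
  moreover have "equiv_states A q2 q'" using assms r0 unfolding sem_det_def by blast
  ultimately show "w \<in> state_lang A q'" by (simp add: equiv_states_def)
qed

lemma step_lang_eq:
  assumes "(q,a,q') \<in> trans A" "sem_det A"
  shows "state_lang A q' = {w. a ## w \<in> state_lang A q}"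
  using step_lang_sub[OF assms(1)] step_lang_sup[OF assms] by blast

lemma prefix_Suc: "prefix (Suc t) w = prefix t w @ [w t]"
  by (simp add: subsequence_def)

lemma reach_resid:
  assumes "(step A)\<^sup>*\<^sup>* (init A) q" "sem_det A"
  shows "\<exists>u. state_lang A q = {w. u \<frown> w \<in> lang A}"
  using assms(1)
proof (induction rule: rtranclp_induct)
  case base
  have "state_lang A (init A) = lang A" by (simp add: state_lang_def)
  then show ?case by (intro exI[of _ "[]"]) simp
next
  case (step y z)
  then obtain u where u: "state_lang A y = {w. u \<frown> w \<in> lang A}" by blast
  from step(2) obtain a where a: "(y,a,z) \<in> trans A" by (auto simp: Defs.step_def)
  have "state_lang A z = {w. (u @ [a]) \<frown> w \<in> lang A}"
    using step_lang_eq[OF a assms(2)] u by simp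
  then show ?case by blast
qed

lemma ssc_trans: "same_safe_comp A p q \<Longrightarrow> same_safe_comp A q r \<Longrightarrow> same_safe_comp A p r"
  unfolding same_safe_comp_def by (meson rtranclp_trans)

lemma ssc_sym: "same_safe_comp A p q \<Longrightarrow> same_safe_comp A q p"
  unfolding same_safe_comp_def by blast

lemma ssc_refl: "q \<in> states A \<Longrightarrow> same_safe_comp A q q"
  unfolding same_safe_comp_def by blast

lemma comp_mem: "C \<in> safe_components A \<Longrightarrow> x \<in> C \<Longrightarrow> same_safe_comp A x y \<Longrightarrow> y \<in> C"
proof -
  assume a: "C \<in> safe_components A" "x \<in> C" "same_safe_comp A x y"
  obtain p where p: "C = {q \<in> states A. same_safe_comp A p q}" using a(1) unfolding safe_components_def by blast
  have "same_safe_comp A p x" using a(2) p by simp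
  then have "same_safe_comp A p y" using a(3) by (rule ssc_trans)
  moreover have "y \<in> states A" using a(3) by (simp add: same_safe_comp_def)
  ultimately show "y \<in> C" using p by simp
qed

lemma comp_sub: "C \<in> safe_components A \<Longrightarrow> C \<subseteq> states A"
  unfolding safe_components_def by auto

lemma comp_ex: "q \<in> states A \<Longrightarrow> \<exists>C\<in>safe_components A. q \<in> C"
proof -
  assume q: "q \<in> states A"
  have "{q' \<in> states A. same_safe_comp A q q'} \<in> safe_components A" using q unfolding safe_components_def
    by (intro CollectI exI[of _ q] conjI refl)
  moreover have "q \<in> {q' \<in> states A. same_safe_comp A q q'}" using q ssc_refl by simp
  ultimately show ?thesis by (rule bexI[rotated])
qed

lemma comp_eq:
  assumes "C \<in> safe_components A" "C' \<in> safe_components A" "x \<in> C" "x \<in> C'"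
  shows "C = C'"
proof -
  obtain p where p: "C = {q \<in> states A. same_safe_comp A p q}" using assms(1) unfolding safe_components_def by blast
  obtain p' where p': "C' = {q \<in> states A. same_safe_comp A p' q}" using assms(2) unfolding safe_components_def by blast
  have "same_safe_comp A p x" "same_safe_comp A p' x" using assms(3,4) p p' by auto
  then have "same_safe_comp A p p'" by (meson ssc_trans ssc_sym)
  then have "\<forall>q. same_safe_comp A p q \<longleftrightarrow> same_safe_comp A p' q" by (meson ssc_trans ssc_sym)
  then show ?thesis using p p' by simp
qed


theorem proposition23:
  fixes L :: "('a::finite) word set"
    and Amin :: "('q,'a) gcba"
    and k :: nat and S :: "nat \<Rightarrow> 'q set"
    and m :: nat and R :: "nat \<Rightarrow> 'a word set"
    and P :: "nat \<Rightarrow> 'p set" and p0 :: 'p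
    and \<phi> :: "nat \<Rightarrow> 'q \<Rightarrow> 'p"
  defines "QR \<equiv> \<lambda>j. {q \<in> states Amin. state_lang Amin q = R j}"
    and "Q \<equiv> (\<Union>j\<in>{1..m}. P j)"
  assumes dcw: "\<exists>D :: (nat,'a) gcba. is_cobuchi D \<and> deterministic D \<and> lang D = L"
    and cob: "is_cobuchi Amin"
    and nice: "nice Amin"
    and smin: "safe_minimal Amin"
    and scent: "safe_centralised Amin"
    and hd: "history_deterministic Amin"
    and lang: "lang Amin = L"
    and comps: "bij_betw S {1..k} (safe_components Amin)"
    and res: "bij_betw R {1..m} (residuals L)"
    and R1: "R 1 = L"
    and Pfin: "\<forall>j\<in>{1..m}. finite (P j)"
    and Pcard: "\<forall>j\<in>{1..m}. card (P j) = Max ((\<lambda>i. card (S i \<inter> QR j)) ` {1..k})"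
    and Pdisj: "\<forall>j\<in>{1..m}. \<forall>j'\<in>{1..m}. j \<noteq> j' \<longrightarrow> P j \<inter> P j' = {}"
    and p0: "p0 \<in> P 1"
    and \<phi>inj: "\<forall>i\<in>{1..k}. inj_on (\<phi> i) (S i)"
    and \<phi>P: "\<forall>i\<in>{1..k}. \<forall>j\<in>{1..m}. \<forall>q\<in>S i \<inter> QR j. \<phi> i q \<in> P j"
  shows "history_deterministic
            \<lparr>states = Q, init = p0,
             trans = {(p,a,p') | p a p'. \<exists>q q' j j'. (q,a,q') \<in> trans Amin \<and>
                        j \<in> {1..m} \<and> j' \<in> {1..m} \<and> q \<in> QR j \<and> q' \<in> QR j' \<and>
                        p \<in> P j \<and> p' \<in> P j'},
             colours = {1..k},
             col = (\<lambda>e. {i \<in> {1..k}. \<not> (\<exists>(q,a,q') \<in> comp_trans Amin (S i).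
                                         (\<phi> i q, a, \<phi> i q') = e)})\<rparr>
       \<and> lang
            \<lparr>states = Q, init = p0,
             trans = {(p,a,p') | p a p'. \<exists>q q' j j'. (q,a,q') \<in> trans Amin \<and>
                        j \<in> {1..m} \<and> j' \<in> {1..m} \<and> q \<in> QR j \<and> q' \<in> QR j' \<and>
                        p \<in> P j \<and> p' \<in> P j'},
             colours = {1..k},
             col = (\<lambda>e. {i \<in> {1..k}. \<not> (\<exists>(q,a,q') \<in> comp_trans Amin (S i).
                                         (\<phi> i q, a, \<phi> i q') = e)})\<rparr> = L"
  proof -
  define A :: "('p,'a) gcba" where "A = \<lparr>states = Q, init = p0,
             trans = {(p,a,p') | p a p'. \<exists>q q' j j'. (q,a,q') \<in> trans Amin \<and>
                        j \<in> {1..m} \<and> j' \<in> {1..m} \<and> q \<in> QR j \<and> q' \<in> QR j' \<and>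
                        p \<in> P j \<and> p' \<in> P j'},
             colours = {1..k},
             col = (\<lambda>e. {i \<in> {1..k}. \<not> (\<exists>(q,a,q') \<in> comp_trans Amin (S i).
                                         (\<phi> i q, a, \<phi> i q') = e)})\<rparr>"
  have A_init: "init A = p0" and A_col: "colours A = {1..k}" by (simp_all add: A_def)
  have A_trans: "(p,a,p') \<in> trans A \<longleftrightarrow> (\<exists>q q' j j'. (q,a,q') \<in> trans Amin \<and>
                        j \<in> {1..m} \<and> j' \<in> {1..m} \<and> q \<in> QR j \<and> q' \<in> QR j' \<and>
                        p \<in> P j \<and> p' \<in> P j')" for p a p' by (simp add: A_def)
  have A_colE: "i \<in> {1..k} \<Longrightarrow> i \<notin> col A e \<Longrightarrow> \<exists>x \<in> comp_trans Amin (S i). (\<phi> i (fst x), fst (snd x), \<phi> i (snd (snd x))) = e" for i e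
    by (auto simp: A_def) (metis fst_conv snd_conv)
  have A_colI: "x \<in> comp_trans Amin (S i) \<Longrightarrow> e = (\<phi> i (fst x), fst (snd x), \<phi> i (snd (snd x))) \<Longrightarrow> i \<notin> col A e" for i e x
    by (auto simp: A_def)
  have wf: "wf_aut Amin" and colAm: "colours Amin = {1}" using cob by (auto simp: is_cobuchi_def)
  have trans_st: "q \<in> states Amin \<and> q' \<in> states Amin" if "(q,a,q') \<in> trans Amin" for q a q'
    using wf that by (auto simp: wf_aut_def)
  have col_sub: "col Amin e \<subseteq> {1}" if "e \<in> trans Amin" for e
    using wf that colAm by (auto simp: wf_aut_def)
  have safe_col: "1 \<notin> col Amin e" if "safe_trans Amin e" for e
    using that col_sub[of e] by (auto simp: safe_trans_def cob_trans_def)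
  have semdet: "sem_det Amin" using nice by (simp add: nice_def)
  have resR: "R ` {1..m} = residuals L" using res by (simp add: bij_betw_def)
  have resid: "\<exists>j\<in>{1..m}. q \<in> QR j" if "q \<in> states Amin" for q
  proof -
    have "(step Amin)\<^sup>*\<^sup>* (init Amin) q" using nice that unfolding nice_def all_reachable_def by blast
    then obtain u where u: "state_lang Amin q = {w. u \<frown> w \<in> lang Amin}" using reach_resid[OF _ semdet] by blast
    have "state_lang Amin q \<in> residuals L" unfolding residuals_def u lang by (intro CollectI exI[of _ u]) simp
    then obtain j where j: "j \<in> {1..m}" "state_lang Amin q = R j" using resR by (metis imageE)
    show ?thesis using that j by (intro bexI[of _ j]) (simp_all add: QR_def)
  qed
  have init_st: "init Amin \<in> states Amin" using wf by (simp add: wf_aut_def)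
  have m1: "1 \<in> {1..m}"
  proof -
    have "L \<in> residuals L" unfolding residuals_def by (rule CollectI, rule exI[of _ "[]"]) simp
    then obtain j where "j \<in> {1..m}" using resR by (metis imageE)
    then show ?thesis by simp
  qed
  have init_QR: "init Amin \<in> QR 1" using init_st lang R1 by (simp add: QR_def state_lang_def)
  have compS: "S i \<in> safe_components Amin" if "i \<in> {1..k}" for i
    using comps that by (auto simp: bij_betw_def)
  have S_st: "S i \<subseteq> states Amin" if "i \<in> {1..k}" for i using comp_sub compS that by blast
  have S_ex: "\<exists>i\<in>{1..k}. q \<in> S i" if qs: "q \<in> states Amin" for q
  proof -
    obtain C where "C \<in> safe_components Amin" "q \<in> C" using comp_ex[OF qs] by blast
    moreover have "safe_components Amin = S ` {1..k}" using comps by (simp add: bij_betw_def)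
    ultimately show ?thesis by blast
  qed
  have Sdisj: "i = i'" if "i \<in> {1..k}" "i' \<in> {1..k}" "q \<in> S i" "q \<in> S i'" for i i' q
  proof -
    have "S i = S i'" using comp_eq[OF compS[OF that(1)] compS[OF that(2)] that(3) that(4)] .
    moreover have "inj_on S {1..k}" using comps by (simp add: bij_betw_def)
    ultimately show ?thesis using that(1,2) by (meson inj_onD)
  qed
  have Pdisj': "j = j'" if "j \<in> {1..m}" "j' \<in> {1..m}" "p \<in> P j" "p \<in> P j'" for j j' p
    using Pdisj that by blast
  have sub: "lang A \<subseteq> L"
  proof
    fix w assume "w \<in> lang A"
    then obtain r where run: "is_run A p0 w r" and acc: "accepting A r" unfolding lang_def A_init by blast
    have r0: "fst (r 0) = p0" and rt: "\<And>t. r t \<in> trans A" and rl: "\<And>t. fst (snd (r t)) = w t"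
      and rc: "\<And>t. snd (snd (r t)) = fst (r (Suc t))" using run by (auto simp: is_run_def)
    have inv: "\<exists>j\<in>{1..m}. fst (r t) \<in> P j \<and> R j \<subseteq> {v. prefix t w \<frown> v \<in> L}" for t
    proof (induction t)
      case 0
      show ?case using m1 r0 p0 R1 by (intro bexI[of _ 1]) (auto simp: subsequence_def)
    next
      case (Suc t)
      then obtain j where j: "j \<in> {1..m}" "fst (r t) \<in> P j" "R j \<subseteq> {v. prefix t w \<frown> v \<in> L}" by blast
      have "r t = (fst (r t), w t, fst (r (Suc t)))" using rl rc by (metis prod.collapse)
      then have "(fst (r t), w t, fst (r (Suc t))) \<in> trans A" using rt by metis
      then obtain q q' j0 j' where tt: "(q, w t, q') \<in> trans Amin" "j0 \<in> {1..m}" "j' \<in> {1..m}"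
        "q \<in> QR j0" "q' \<in> QR j'" "fst (r t) \<in> P j0" "fst (r (Suc t)) \<in> P j'"
        unfolding A_trans by blast
      have "j0 = j" using Pdisj' tt j by blast
      then have "state_lang Amin q = R j" "state_lang Amin q' = R j'" using tt by (auto simp: QR_def)
      then have "R j' \<subseteq> {v. w t ## v \<in> R j}" using step_lang_sub[OF tt(1)] by simp
      also have "\<dots> \<subseteq> {v. prefix (Suc t) w \<frown> v \<in> L}" using j(3) by (auto simp: prefix_Suc)
      finally show ?case using tt by blast
    qed
    obtain c where c: "c \<in> {1..k}" "finite {t. c \<in> col A (r t)}" using acc by (auto simp: accepting_def A_col)
    obtain N where N: "\<forall>t\<ge>N. c \<notin> col A (r t)"
      using c(2) by (metis (mono_tags, lifting) finite_nat_set_iff_bounded_le mem_Collect_eq not_less_eq_eq)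
    define CT where "CT = comp_trans Amin (S c)"
    define g where "g t = (SOME x. x \<in> CT \<and> (\<phi> c (fst x), fst (snd x), \<phi> c (snd (snd x))) = r t)" for t
    have g: "g t \<in> CT \<and> (\<phi> c (fst (g t)), fst (snd (g t)), \<phi> c (snd (snd (g t)))) = r t" if "t \<ge> N" for t
    proof -
      have "\<exists>x. x \<in> CT \<and> (\<phi> c (fst x), fst (snd x), \<phi> c (snd (snd x))) = r t"
        using A_colE[OF c(1)] N that unfolding CT_def by blast
      then show ?thesis unfolding g_def by (rule someI_ex)
    qed
    have CT: "x \<in> CT \<Longrightarrow> safe_trans Amin x \<and> fst x \<in> S c \<and> snd (snd x) \<in> S c" for x
      by (simp add: CT_def comp_trans_def)
    have injc: "inj_on (\<phi> c) (S c)" using \<phi>inj c(1) by blast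
    define rr where "rr i = g (N + i)" for i
    have "is_run Amin (fst (g N)) (suffix N w) rr"
      unfolding is_run_def
    proof (intro conjI allI)
      show "fst (rr 0) = fst (g N)" by (simp add: rr_def)
    next
      fix i
      have gi: "g (N+i) \<in> CT" "(\<phi> c (fst (g (N+i))), fst (snd (g (N+i))), \<phi> c (snd (snd (g (N+i))))) = r (N+i)"
        using g[of "N+i"] by auto
      have gi': "g (N+Suc i) \<in> CT" "(\<phi> c (fst (g (N+Suc i))), fst (snd (g (N+Suc i))), \<phi> c (snd (snd (g (N+Suc i))))) = r (N+Suc i)"
        using g[of "N+Suc i"] by auto
      show "rr i \<in> trans Amin" using CT[OF gi(1)] by (simp add: rr_def safe_trans_def)
      show "fst (snd (rr i)) = suffix N w i" using gi(2)[symmetric] rl[of "N+i"] by (simp add: rr_def)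
      have "\<phi> c (snd (snd (g (N+i)))) = \<phi> c (fst (g (N + Suc i)))"
        using gi(2) gi'(2) rc[of "N+i"] by (metis add_Suc_right fst_conv snd_conv)
      then show "snd (snd (rr i)) = fst (rr (Suc i))"
        using injc CT[OF gi(1)] CT[OF gi'(1)] by (simp add: rr_def inj_on_def)
    qed
    moreover have "accepting Amin rr"
    proof -
      have "{i. 1 \<in> col Amin (rr i)} = {}" using g CT safe_col by (auto simp: rr_def)
      then show ?thesis by (auto simp: accepting_def colAm)
    qed
    ultimately have suf: "suffix N w \<in> state_lang Amin (fst (g N))" by (auto simp: state_lang_alt)
    have x0S: "fst (g N) \<in> S c" using g[of N] CT by auto
    then have "fst (g N) \<in> states Amin" using S_st c(1) by blast
    then obtain j where j: "j \<in> {1..m}" "fst (g N) \<in> QR j" using resid by blast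
    have "\<phi> c (fst (g N)) \<in> P j" using \<phi>P c(1) j x0S by blast
    moreover have "\<phi> c (fst (g N)) = fst (r N)" using g[of N] by (metis fst_conv order_refl)
    moreover obtain jN where jN: "jN \<in> {1..m}" "fst (r N) \<in> P jN" "R jN \<subseteq> {v. prefix N w \<frown> v \<in> L}" using inv by blast
    ultimately have "j = jN" using Pdisj' j(1) by metis
    then have "suffix N w \<in> R jN" using suf j(2) by (simp add: QR_def)
    then have "prefix N w \<frown> suffix N w \<in> L" using jN(3) by blast
    then show "w \<in> L" using prefix_suffix by metis
  qed
  obtain \<sigma> where \<sigma>: "is_resolver Amin \<sigma>" using hd by (auto simp: history_deterministic_def)
  define ci where "ci q = (SOME i. i \<in> {1..k} \<and> q \<in> S i)" for q
  have ci: "ci q \<in> {1..k} \<and> q \<in> S (ci q)" if "q \<in> states Amin" for q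
    unfolding ci_def by (rule someI_ex) (use S_ex[OF that] in blast)
  define f where "f v = (if v = [] then p0 else \<phi> (ci (snd (snd (\<sigma> v)))) (snd (snd (\<sigma> v))))" for v
  define \<tau> where "\<tau> v = (f (butlast v), last v, f v)" for v
  have \<tau>eq: "\<tau> (prefix (Suc t) w) = (f (prefix t w), w t, f (prefix (Suc t) w))" for t w
    by (simp add: \<tau>_def prefix_Suc)
  have pne: "prefix (Suc t) w \<noteq> []" for t and w :: "'a word" by (simp add: prefix_Suc)
  have runA: "is_run A p0 w (\<lambda>t. \<tau> (prefix (Suc t) w))" for w
  proof -
    let ?r = "\<lambda>t. \<sigma> (prefix (Suc t) w)"
    have run: "is_run Amin (init Amin) w ?r" using \<sigma> by (simp add: is_resolver_def)
    have r0: "fst (?r 0) = init Amin" and rt: "\<And>t. ?r t \<in> trans Amin" and rl: "\<And>t. fst (snd (?r t)) = w t"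
      and rc: "\<And>t. snd (snd (?r t)) = fst (?r (Suc t))" using run by (auto simp: is_run_def)
    have F: "\<exists>j\<in>{1..m}. fst (?r t) \<in> QR j \<and> f (prefix t w) \<in> P j" for t
    proof (cases t)
      case 0
      then show ?thesis using r0 init_QR m1 p0 by (auto simp: f_def subsequence_def)
    next
      case (Suc t')
      let ?q = "snd (snd (?r t'))"
      have fq: "fst (?r t) = ?q" using rc Suc by simp
      have "?q \<in> states Amin" using trans_st rt[of t'] by (metis prod.collapse)
      then obtain j where j: "j \<in> {1..m}" "?q \<in> QR j" and cq: "ci ?q \<in> {1..k}" "?q \<in> S (ci ?q)"
        using resid ci by blast
      have "f (prefix t w) = \<phi> (ci ?q) ?q" using Suc pne by (simp add: f_def)
      then show ?thesis using j cq fq \<phi>P by auto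
    qed
    show ?thesis unfolding is_run_def
    proof (intro conjI allI)
      show "fst (\<tau> (prefix (Suc 0) w)) = p0" by (simp add: \<tau>_def f_def)
    next
      fix t
      obtain j where j: "j \<in> {1..m}" "fst (?r t) \<in> QR j" "f (prefix t w) \<in> P j" using F by blast
      obtain j' where j': "j' \<in> {1..m}" "fst (?r (Suc t)) \<in> QR j'" "f (prefix (Suc t) w) \<in> P j'" using F by blast
      have "?r t = (fst (?r t), w t, fst (?r (Suc t)))" using rl rc by (metis prod.collapse)
      then have "(fst (?r t), w t, fst (?r (Suc t))) \<in> trans Amin" using rt by metis
      then show "\<tau> (prefix (Suc t) w) \<in> trans A" unfolding \<tau>eq A_trans using j j' by blast
      show "fst (snd (\<tau> (prefix (Suc t) w))) = w t" unfolding \<tau>eq by simp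
      show "snd (snd (\<tau> (prefix (Suc t) w))) = fst (\<tau> (prefix (Suc (Suc t)) w))" unfolding \<tau>eq by simp
    qed
  qed
  have accA: "accepting A (\<lambda>t. \<tau> (prefix (Suc t) w))" if "w \<in> L" for w
  proof -
    let ?r = "\<lambda>t. \<sigma> (prefix (Suc t) w)"
    have run: "is_run Amin (init Amin) w ?r" and acc: "accepting Amin ?r"
      using \<sigma> that lang by (auto simp: is_resolver_def)
    have rt: "\<And>t. ?r t \<in> trans Amin" and rl: "\<And>t. fst (snd (?r t)) = w t"
      and rc: "\<And>t. snd (snd (?r t)) = fst (?r (Suc t))" using run by (auto simp: is_run_def)
    have "finite {t. 1 \<in> col Amin (?r t)}" using acc by (auto simp: accepting_def colAm)
    then obtain N where N: "\<forall>t\<ge>N. 1 \<notin> col Amin (?r t)"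
      by (metis (mono_tags, lifting) finite_nat_set_iff_bounded_le mem_Collect_eq not_less_eq_eq)
    have safe: "safe_trans Amin (?r t)" if "t \<ge> N" for t
      using N that rt[of t] by (auto simp: safe_trans_def cob_trans_def)
    let ?x = "snd (snd (?r N))"
    have xst: "?x \<in> states Amin" using trans_st rt[of N] by (metis prod.collapse)
    define i0 where "i0 = ci ?x"
    have i0: "i0 \<in> {1..k}" "?x \<in> S i0" using ci[OF xst] by (auto simp: i0_def)
    have inS: "snd (snd (?r (N + d))) \<in> S i0" for d
    proof (induction d)
      case 0 then show ?case using i0 by simp
    next
      case (Suc d)
      let ?y = "fst (?r (N + Suc d))" and ?z = "snd (snd (?r (N + Suc d)))"
      have y: "?y \<in> S i0" using Suc rc[of "N + d"] by simp
      have eq: "?r (N + Suc d) = (?y, w (N + Suc d), ?z)" using rl[of "N + Suc d"] by (metis prod.collapse)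
      have tr: "(?y, w (N + Suc d), ?z) \<in> trans Amin" using rt[of "N + Suc d"] eq by simp
      have "safe_trans Amin (?r (N + Suc d))" by (rule safe) simp
      then have sf: "safe_trans Amin (?y, w (N + Suc d), ?z)" using eq by simp
      have ssc: "same_safe_comp Amin ?y ?z"
      proof (rule ccontr)
        assume "\<not> same_safe_comp Amin ?y ?z"
        moreover have "normal_form Amin" using nice by (simp add: nice_def)
        ultimately have "cob_trans Amin (?y, w (N + Suc d), ?z)" using tr unfolding normal_form_def by blast
        then show False using sf by (simp add: safe_trans_def)
      qed
      show ?case by (rule comp_mem[OF compS[OF i0(1)] y ssc])
    qed
    have notcol: "i0 \<notin> col A (\<tau> (prefix (Suc t) w))" if "t \<ge> Suc N" for t
    proof -
      define d where "d = t - Suc N"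
      have d: "t = Suc (N + d)" using that by (simp add: d_def)
      let ?q = "fst (?r t)" and ?q' = "snd (snd (?r t))"
      have q: "?q \<in> S i0" using inS[of d] rc[of "N+d"] d by simp
      have q': "?q' \<in> S i0" using inS[of "Suc d"] d by simp
      have qst: "?q \<in> states Amin" "?q' \<in> states Amin" using S_st[OF i0(1)] q q' by auto
      have ciq: "ci ?q = i0" using Sdisj[of "ci ?q" i0 ?q] ci[OF qst(1)] i0(1) q by blast
      have ciq': "ci ?q' = i0" using Sdisj[of "ci ?q'" i0 ?q'] ci[OF qst(2)] i0(1) q' by blast
      have e: "?r t = (?q, w t, ?q')" using rl by (metis prod.collapse)
      have "safe_trans Amin (?r t)" using safe that by simp
      then have ct: "(?q, w t, ?q') \<in> comp_trans Amin (S i0)" using q q' e by (simp add: comp_trans_def)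
      have f1: "f (prefix t w) = \<phi> i0 ?q" using d pne ciq rc[of "N+d"] by (simp add: f_def)
      have f2: "f (prefix (Suc t) w) = \<phi> i0 ?q'" using pne ciq' by (simp add: f_def)
      show ?thesis unfolding \<tau>eq f1 f2 by (rule A_colI[OF ct]) simp
    qed
    have "{t. i0 \<in> col A (\<tau> (prefix (Suc t) w))} \<subseteq> {..N}" using notcol not_less_eq_eq by auto
    then have "finite {t. i0 \<in> col A (\<tau> (prefix (Suc t) w))}" using finite_subset by blast
    then show ?thesis using i0(1) by (auto simp: accepting_def A_col)
  qed
  have langA: "lang A = L"
  proof
    show "L \<subseteq> lang A" using runA accA by (auto simp: lang_def A_init)
  qed (rule sub)
  have "history_deterministic A"
    unfolding history_deterministic_def is_resolver_def
    using runA accA sub A_init by (intro exI[of _ \<tau>]) auto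
  then show ?thesis using langA by (simp add: A_def)
qed

end
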